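(* Let $X$ be an infinite dimensional real Banach space. Then $dens(X)\leq 2^{biort(X)}$.
   Context: $dens(X)$ is the least cardinality of a norm-dense subset of $X$. A biorthogonal system in $X$ is a family $(x_i,x_i^* )_{i\in I}\subseteq X\times X^*$ with $x_i^*(x_i)=1$ for all $i$ and $x_i^*(x_j)=0$ for $i\neq j$. $biort(X)$ is the supremum of $|I|$ over all biorthogonal systems $(x_i,x_i^* )_{i\in I}$ in $X$. *)

theory Defs
  imports "HOL-Analysis.Analysis"
begin

definition biorthogonal_system :: "'i set \<Rightarrow> ('i \<Rightarrow> 'a::real_normed_vector) \<Rightarrow> ('i \<Rightarrow> 'a \<Rightarrow> real) \<Rightarrow> bool" where
  "biorthogonal_system I x f \<longleftrightarrow>
     (\<forall>i\<in>I. bounded_linear (f i)) \<and>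
     (\<forall>i\<in>I. f i (x i) = 1) \<and>
     (\<forall>i\<in>I. \<forall>j\<in>I. i \<noteq> j \<longrightarrow> f i (x j) = 0)"

text \<open>K bounds biort(X) from above: every biorthogonal system has index set of
cardinality at most |K|. (Index sets may be taken inside X, since the x i are distinct.)\<close>
definition biort_bounded_by :: "'a::real_normed_vector itself \<Rightarrow> 'k set \<Rightarrow> bool" where
  "biort_bounded_by TYPE('a) K \<longleftrightarrow>
     (\<forall>(I::'a set) (x::'a \<Rightarrow> 'a) f. biorthogonal_system I x f \<longrightarrow> (card_of I, card_of K) \<in> ordLeq)"

definition is_biort :: "'a::real_normed_vector itself \<Rightarrow> 'k set \<Rightarrow> bool" where
  "is_biort T K \<longleftrightarrow> biort_bounded_by T K \<and>
     (\<forall>L::'a set. biort_bounded_by T L \<longrightarrow> (card_of K, card_of L) \<in> ordLeq)"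

end

theory Submission
  imports Defs "HOL-Library.Countable"
begin

definition HBgood :: "real \<Rightarrow> ('a::real_normed_vector \<times> real) set \<Rightarrow> bool" where
 "HBgood C G \<longleftrightarrow> G \<noteq> {} \<and> (\<forall>x s y t. (x,s)\<in>G \<longrightarrow> (y,t)\<in>G \<longrightarrow> (x+y, s+t) \<in> G)
   \<and> (\<forall>x s c. (x,s)\<in>G \<longrightarrow> (c *\<^sub>R x, c * s) \<in> G) \<and> (\<forall>x s. (x,s)\<in>G \<longrightarrow> s \<le> C * norm x)"

lemma HB_zero: "HBgood C G \<Longrightarrow> (0,0) \<in> G"
  unfolding HBgood_def by (metis mult_zero_left scaleR_zero_left surj_pair ex_in_conv)

lemma HBgoodD:
  assumes "HBgood C G"
  shows "G \<noteq> {}" "\<And>x s y t. (x,s)\<in>G \<Longrightarrow> (y,t)\<in>G \<Longrightarrow> (x+y, s+t) \<in> G"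
    "\<And>x s c. (x,s)\<in>G \<Longrightarrow> (c *\<^sub>R x, c * s) \<in> G" "\<And>x s. (x,s)\<in>G \<Longrightarrow> s \<le> C * norm x"
  using assms unfolding HBgood_def by blast+

lemma HB_fun: assumes "HBgood C G" "(x,s)\<in>G" "(x,t)\<in>G" shows "s = t"
proof -
  have a: "\<And>s t. (x,s)\<in>G \<Longrightarrow> (x,t)\<in>G \<Longrightarrow> s - t \<le> 0"
  proof -
    fix s t assume "(x,s)\<in>G" "(x,t)\<in>G"
    then have "((-1) *\<^sub>R x, (-1) * t) \<in> G" using assms(1) unfolding HBgood_def by blast
    then have "(x + (-1) *\<^sub>R x, s + (-1) * t) \<in> G" using \<open>(x,s)\<in>G\<close> assms(1) unfolding HBgood_def by blast
    then have "s + (-1)*t \<le> C * norm (x + (-1) *\<^sub>R x)" using assms(1) unfolding HBgood_def by blast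
    then show "s - t \<le> 0" by simp
  qed
  from a[OF assms(2,3)] a[OF assms(3,2)] show ?thesis by simp
qed

lemma HB_step:
  assumes C: "C \<ge> 0" and G: "HBgood C G" and x0: "\<forall>s. (x0,s) \<notin> G"
  shows "\<exists>G'. HBgood C G' \<and> G \<subseteq> G' \<and> G' \<noteq> G"
proof -
  have add: "\<And>x s y t. (x,s)\<in>G \<Longrightarrow> (y,t)\<in>G \<Longrightarrow> (x+y, s+t) \<in> G"
   and sc: "\<And>x s c. (x,s)\<in>G \<Longrightarrow> (c *\<^sub>R x, c * s) \<in> G"
   and dom: "\<And>x s. (x,s)\<in>G \<Longrightarrow> s \<le> C * norm x" using G unfolding HBgood_def by blast+
  have z: "(0,0)\<in>G" using HB_zero[OF G] .
  define V where "V = {s - C * norm (y - x0) | y s. (y,s)\<in>G}"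
  define v where "v = Sup V"
  have key: "\<And>y s z t. (y,s)\<in>G \<Longrightarrow> (z,t)\<in>G \<Longrightarrow> s - C * norm (y - x0) \<le> C * norm (z + x0) - t"
  proof -
    fix y s z t assume "(y,s)\<in>G" "(z,t)\<in>G"
    then have "s + t \<le> C * norm (y + z)" using add dom by blast
    also have "norm (y + z) \<le> norm (y - x0) + norm (z + x0)"
      using norm_triangle_ineq[of "y - x0" "z + x0"] by simp
    then have "C * norm (y + z) \<le> C * norm (y - x0) + C * norm (z + x0)"
      using C by (metis distrib_left mult_left_mono)
    finally show "s - C * norm (y - x0) \<le> C * norm (z + x0) - t" by simp
  qed
  have Vne: "V \<noteq> {}" using z unfolding V_def by blast
  have up: "\<And>y s. (y,s)\<in>G \<Longrightarrow> s - C * norm (y - x0) \<le> v"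
  proof -
    fix y s assume "(y,s)\<in>G"
    have "bdd_above V" unfolding V_def bdd_above_def using key[OF _ z] by auto
    then show "s - C * norm (y - x0) \<le> v" unfolding v_def
      by (rule cSup_upper[rotated]) (use \<open>(y,s)\<in>G\<close> V_def in blast)
  qed
  have lo: "\<And>z t. (z,t)\<in>G \<Longrightarrow> v \<le> C * norm (z + x0) - t"
    unfolding v_def using Vne by (intro cSup_least) (auto simp: V_def intro: key)
  define G' where "G' = {(y + r *\<^sub>R x0, s + r * v) | y s r. (y,s)\<in>G}"
  have sub: "G \<subseteq> G'" unfolding G'_def by force
  have new: "(x0, v) \<in> G'" unfolding G'_def using z by force
  have "HBgood C G'"
    unfolding HBgood_def
  proof (intro conjI allI impI)
    show "G' \<noteq> {}" using new by blast
  next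
    fix x s y t assume "(x,s)\<in>G'" "(y,t)\<in>G'"
    then obtain y1 s1 r1 y2 s2 r2 where "(y1,s1)\<in>G" "(y2,s2)\<in>G"
      "x = y1 + r1 *\<^sub>R x0" "s = s1 + r1 * v" "y = y2 + r2 *\<^sub>R x0" "t = s2 + r2 * v"
      unfolding G'_def by blast
    then show "(x + y, s + t) \<in> G'" unfolding G'_def
      by (intro CollectI exI[of _ "y1+y2"] exI[of _ "s1+s2"] exI[of _ "r1+r2"])
        (auto intro: add simp: algebra_simps)
  next
    fix x s c assume "(x,s)\<in>G'"
    then obtain y1 s1 r1 where "(y1,s1)\<in>G" "x = y1 + r1 *\<^sub>R x0" "s = s1 + r1 * v"
      unfolding G'_def by blast
    then show "(c *\<^sub>R x, c * s) \<in> G'" unfolding G'_def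
      by (intro CollectI exI[of _ "c *\<^sub>R y1"] exI[of _ "c * s1"] exI[of _ "c * r1"])
        (auto intro: sc simp: algebra_simps)
  next
    fix x s assume "(x,s)\<in>G'"
    then obtain y s1 r where ys: "(y,s1)\<in>G" and xs: "x = y + r *\<^sub>R x0" "s = s1 + r * v"
      unfolding G'_def by blast
    show "s \<le> C * norm x"
    proof (cases "r = 0")
      case True then show ?thesis using dom[OF ys] xs by simp
    next
      case False
      show ?thesis
      proof (cases "r > 0")
        case True
        have "(inverse r *\<^sub>R y, inverse r * s1) \<in> G" using sc[OF ys] .
        from lo[OF this] have "v \<le> C * norm (inverse r *\<^sub>R y + x0) - inverse r * s1" .
        then have "r * v \<le> r * (C * norm (inverse r *\<^sub>R y + x0) - inverse r * s1)"
          using True by (simp add: mult_left_mono)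
        also have "\<dots> = C * (r * norm (inverse r *\<^sub>R y + x0)) - s1" using True by (simp add: algebra_simps)
        also have "r * norm (inverse r *\<^sub>R y + x0) = norm (r *\<^sub>R (inverse r *\<^sub>R y + x0))"
          using True by simp
        also have "r *\<^sub>R (inverse r *\<^sub>R y + x0) = x" using True xs by (simp add: scaleR_add_right)
        finally show ?thesis using xs by simp
      next
        case False2: False
        define u where "u = - r"
        have u: "u > 0" using False False2 u_def by simp
        have "(inverse u *\<^sub>R y, inverse u * s1) \<in> G" using sc[OF ys] .
        from up[OF this] have "inverse u * s1 - C * norm (inverse u *\<^sub>R y - x0) \<le> v" .
        then have "u * (inverse u * s1 - C * norm (inverse u *\<^sub>R y - x0)) \<le> u * v"
          using u by (simp add: mult_left_mono)
        then have "s1 - C * (u * norm (inverse u *\<^sub>R y - x0)) \<le> u * v" using u by (simp add: algebra_simps)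
        also have "u * norm (inverse u *\<^sub>R y - x0) = norm (u *\<^sub>R (inverse u *\<^sub>R y - x0))"
          using u by simp
        also have "u *\<^sub>R (inverse u *\<^sub>R y - x0) = x" using u xs u_def by (simp add: scaleR_diff_right)
        finally show ?thesis using xs u_def by simp
      qed
    qed
  qed
  moreover have "G' \<noteq> G" using new x0 by blast
  ultimately show ?thesis using sub by blast
qed

lemma HB_ext:
  assumes C: "C \<ge> 0" and G0: "HBgood C (G0 :: ('a::real_normed_vector \<times> real) set)"
  shows "\<exists>f. bounded_linear f \<and> (\<forall>x s. (x,s) \<in> G0 \<longrightarrow> f x = s)"
proof -
  define AA where "AA = {G. HBgood C G \<and> G0 \<subseteq> G}"
  have "\<exists>M\<in>AA. \<forall>X\<in>AA. M \<subseteq> X \<longrightarrow> X = M"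
  proof (rule Zorn_Lemma2, intro ballI)
    fix CC assume CC: "CC \<in> chains AA"
    show "\<exists>U\<in>AA. \<forall>X\<in>CC. X \<subseteq> U"
    proof (cases "CC = {}")
      case True then show ?thesis using G0 unfolding AA_def by auto
    next
      case False
      have CCA: "CC \<subseteq> AA" and ch: "\<And>X Y. X\<in>CC \<Longrightarrow> Y\<in>CC \<Longrightarrow> X \<subseteq> Y \<or> Y \<subseteq> X"
        using CC unfolding chains_def chain_subset_def by blast+
      have "HBgood C (\<Union>CC)"
        unfolding HBgood_def
      proof (intro conjI allI impI)
        obtain X where "X \<in> CC" using False by blast
        then have "HBgood C X" using CCA unfolding AA_def by blast
        then show "\<Union>CC \<noteq> {}" using \<open>X \<in> CC\<close> HBgoodD(1) by blast
      next
        fix x s y t assume "(x,s)\<in>\<Union>CC" "(y,t)\<in>\<Union>CC"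
        then obtain X Y where XY: "X\<in>CC" "Y\<in>CC" "(x,s)\<in>X" "(y,t)\<in>Y" by blast
        from ch[OF XY(1,2)] show "(x+y,s+t)\<in>\<Union>CC"
        proof
          assume "X \<subseteq> Y"
          then have "(x,s)\<in>Y" using XY by blast
          moreover have "HBgood C Y" using XY CCA unfolding AA_def by blast
          ultimately have "(x+y,s+t)\<in>Y" using XY(4) HBgoodD(2) by blast
          then show ?thesis using XY(2) by blast
        next
          assume "Y \<subseteq> X"
          then have "(y,t)\<in>X" using XY by blast
          moreover have "HBgood C X" using XY CCA unfolding AA_def by blast
          ultimately have "(x+y,s+t)\<in>X" using XY(3) HBgoodD(2) by blast
          then show ?thesis using XY(1) by blast
        qed
      next
        fix x s c assume "(x,s)\<in>\<Union>CC"
        then obtain X where "X \<in> CC" "(x,s)\<in>X" by blast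
        moreover have "HBgood C X" using CCA \<open>X \<in> CC\<close> unfolding AA_def by blast
        ultimately show "(c *\<^sub>R x, c * s) \<in> \<Union>CC" using HBgoodD(3) by blast
      next
        fix x s assume "(x,s)\<in>\<Union>CC"
        then obtain X where "X \<in> CC" "(x,s)\<in>X" by blast
        moreover have "HBgood C X" using CCA \<open>X \<in> CC\<close> unfolding AA_def by blast
        ultimately show "s \<le> C * norm x" using HBgoodD(4) by blast
      qed
      moreover have "G0 \<subseteq> \<Union>CC" using False CCA unfolding AA_def by blast
      ultimately show ?thesis unfolding AA_def by blast
    qed
  qed
  then obtain M where M: "HBgood C M" "G0 \<subseteq> M" and max: "\<And>X. HBgood C X \<Longrightarrow> G0 \<subseteq> X \<Longrightarrow> M \<subseteq> X \<Longrightarrow> X = M"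
    unfolding AA_def by auto
  have tot: "\<And>x. \<exists>s. (x,s)\<in>M"
  proof (rule ccontr)
    fix x assume "\<not> (\<exists>s. (x,s)\<in>M)"
    then obtain G' where "HBgood C G'" "M \<subseteq> G'" "G' \<noteq> M" using HB_step[OF C M(1)] by blast
    then show False using max M(2) by blast
  qed
  define f where "f x = (THE s. (x,s)\<in>M)" for x
  have fM: "\<And>x. (x, f x) \<in> M"
  proof -
    fix x obtain s where s: "(x,s)\<in>M" using tot by blast
    have "(THE s. (x,s)\<in>M) = s" using s HB_fun[OF M(1)] by blast
    then show "(x, f x)\<in>M" using s f_def by simp
  qed
  have feq: "\<And>x s. (x,s)\<in>M \<Longrightarrow> f x = s" using fM HB_fun[OF M(1)] by blast
  have Madd: "\<And>x s y t. (x,s)\<in>M \<Longrightarrow> (y,t)\<in>M \<Longrightarrow> (x+y, s+t) \<in> M"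
   and Msc: "\<And>x s c. (x,s)\<in>M \<Longrightarrow> (c *\<^sub>R x, c * s) \<in> M"
   and Mdom: "\<And>x s. (x,s)\<in>M \<Longrightarrow> s \<le> C * norm x" using M(1) unfolding HBgood_def by blast+
  have fadd: "\<And>x y. f (x + y) = f x + f y" by (rule feq, rule Madd, rule fM, rule fM)
  have fsc: "\<And>c x. f (c *\<^sub>R x) = c * f x" by (rule feq, rule Msc, rule fM)
  have nb: "\<And>x. norm (f x) \<le> norm x * C"
  proof -
    fix x
    have "f x \<le> C * norm x" using Mdom fM by blast
    moreover have "f (-x) \<le> C * norm (-x)" using Mdom fM by blast
    moreover have "f (-x) = - f x" using fsc[of "-1" x] by simp
    ultimately show "norm (f x) \<le> norm x * C" by (auto simp: abs_if mult.commute)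
  qed
  have "bounded_linear f"
    by (rule bounded_linear_intro[where K=C]) (use fadd fsc nb in auto)
  then show ?thesis using feq M(2) by blast
qed

lemma HB_sep:
  fixes Z :: "'a::real_normed_vector set"
  assumes "closed Z" "subspace Z" "w \<notin> Z"
  shows "\<exists>f::'a\<Rightarrow>real. bounded_linear f \<and> f w = 1 \<and> (\<forall>z\<in>Z. f z = 0)"
proof -
  have Z0: "0 \<in> Z" using assms(2) by (simp add: subspace_0)
  define d where "d = infdist w Z"
  have d: "d > 0" unfolding d_def using assms Z0 by (intro infdist_pos_not_in_closed) auto
  define G0 where "G0 = {(z + t *\<^sub>R w, t) | z t. z \<in> Z}"
  have "HBgood (1/d) G0"
    unfolding HBgood_def
  proof (intro conjI allI impI)
    show "G0 \<noteq> {}" using Z0 unfolding G0_def by blast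
  next
    fix x s y t assume "(x,s)\<in>G0" "(y,t)\<in>G0"
    then obtain z1 z2 where "z1\<in>Z" "z2\<in>Z" "x = z1 + s *\<^sub>R w" "y = z2 + t *\<^sub>R w"
      unfolding G0_def by blast
    then show "(x+y, s+t)\<in>G0" unfolding G0_def using assms(2)
      by (intro CollectI exI[of _ "z1+z2"] exI[of _ "s+t"]) (auto simp: subspace_add algebra_simps)
  next
    fix x s c assume "(x,s)\<in>G0"
    then obtain z1 where "z1\<in>Z" "x = z1 + s *\<^sub>R w" unfolding G0_def by blast
    then show "(c *\<^sub>R x, c * s)\<in>G0" unfolding G0_def using assms(2)
      by (intro CollectI exI[of _ "c *\<^sub>R z1"] exI[of _ "c * s"]) (auto simp: subspace_scale algebra_simps)
  next
    fix x s assume "(x,s)\<in>G0"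
    then obtain z where z: "z\<in>Z" "x = z + s *\<^sub>R w" unfolding G0_def by blast
    show "s \<le> 1/d * norm x"
    proof (cases "s > 0")
      case False
      then show ?thesis using d by (smt (verit) divide_nonneg_nonneg norm_ge_zero mult_nonneg_nonneg)
    next
      case True
      have mz: "- (inverse s *\<^sub>R z) \<in> Z" using assms(2) z(1) by (simp add: subspace_neg subspace_scale)
      have "d \<le> dist w (- (inverse s *\<^sub>R z))" unfolding d_def by (rule infdist_le[OF mz])
      also have "dist w (- (inverse s *\<^sub>R z)) = norm (inverse s *\<^sub>R x)"
        using True z(2) by (simp add: dist_norm algebra_simps)
      also have "\<dots> = norm x / s" using True by (simp add: field_simps)
      finally have "d * s \<le> norm x" using True by (simp add: field_simps)
      then show ?thesis using d by (simp add: field_simps mult.commute)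
    qed
  qed
  from HB_ext[OF _ this] d obtain f where f: "bounded_linear f" "\<And>x s. (x,s)\<in>G0 \<Longrightarrow> f x = s"
    by auto
  have fw: "f w = 1" using f(2)[of w 1] Z0 unfolding G0_def by force
  have fz: "\<forall>z\<in>Z. f z = 0" using f(2) unfolding G0_def by force
  show ?thesis
  proof (intro exI conjI)
    show "bounded_linear f" by (rule f(1))
    show "f w = 1" by (rule fw)
    show "\<forall>z\<in>Z. f z = 0" by (rule fz)
  qed
qed

lemma subspace_closure_gen:
  fixes S :: "'a::real_normed_vector set"
  assumes "subspace S" shows "subspace (closure S)"
  unfolding subspace_def
proof (intro conjI ballI allI)
  show "0 \<in> closure S" using assms closure_subset subspace_0 by blast
next
  fix x y assume "x \<in> closure S" "y \<in> closure S"
  then obtain u v where u: "\<forall>n. u n \<in> S" "u \<longlonglongrightarrow> x" and v: "\<forall>n. v n \<in> S" "v \<longlonglongrightarrow> y"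
    unfolding closure_sequential by blast
  have "\<forall>n. u n + v n \<in> S" using u v assms subspace_add by blast
  moreover have "(\<lambda>n. u n + v n) \<longlonglongrightarrow> x + y" using u v by (intro tendsto_add)
  ultimately show "x + y \<in> closure S" unfolding closure_sequential by (intro exI[of _ "\<lambda>n. u n + v n"]) auto
next
  fix c x assume "x \<in> closure S"
  then obtain u where u: "\<forall>n. u n \<in> S" "u \<longlonglongrightarrow> x" unfolding closure_sequential by blast
  have "\<forall>n. c *\<^sub>R u n \<in> S" using u assms subspace_scale by blast
  moreover have "(\<lambda>n. c *\<^sub>R u n) \<longlonglongrightarrow> c *\<^sub>R x" using u by (intro tendsto_scaleR tendsto_const)
  ultimately show "c *\<^sub>R x \<in> closure S" unfolding closure_sequential by (intro exI[of _ "\<lambda>n. c *\<^sub>R u n"]) auto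
qed

definition BOgood :: "('a::real_normed_vector \<times> ('a \<Rightarrow> real)) set \<Rightarrow> bool" where
 "BOgood P \<longleftrightarrow> (\<forall>a f. (a,f)\<in>P \<longrightarrow> bounded_linear f \<and> f a = 1) \<and>
    (\<forall>a f b g. (a,f)\<in>P \<longrightarrow> (b,g)\<in>P \<longrightarrow> (a \<noteq> b \<longrightarrow> f b = 0) \<and> (a = b \<longrightarrow> f = g))"

lemma BO_chain:
  fixes CC :: "('a::real_normed_vector \<times> ('a \<Rightarrow> real)) set set"
  assumes CC: "CC \<in> chains {P. BOgood P}"
  shows "\<Union>CC \<in> {P. BOgood P}"
proof -
    have CCA: "\<And>X. X \<in> CC \<Longrightarrow> BOgood X" and ch: "\<And>X Y. X\<in>CC \<Longrightarrow> Y\<in>CC \<Longrightarrow> X \<subseteq> Y \<or> Y \<subseteq> X"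
      using CC unfolding chains_def chain_subset_def by blast+
    have "BOgood (\<Union>CC)"
      unfolding BOgood_def
    proof (rule conjI; intro allI impI)
      fix a f assume "(a,f)\<in>\<Union>CC"
      then obtain X where "X\<in>CC" "(a,f)\<in>X" by blast
      then show "bounded_linear f \<and> f a = 1" using CCA unfolding BOgood_def by blast
    next
      fix a f b g assume "(a,f)\<in>\<Union>CC" "(b,g)\<in>\<Union>CC"
      then obtain X Y where XY: "X\<in>CC" "(a,f)\<in>X" "Y\<in>CC" "(b,g)\<in>Y" by blast
      have "\<exists>Z\<in>CC. (a,f)\<in>Z \<and> (b,g)\<in>Z" using ch[OF XY(1,3)] XY by blast
      then obtain Z where "Z\<in>CC" "(a,f)\<in>Z" "(b,g)\<in>Z" by blast
      then have "BOgood Z" using CCA by blast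
      then show "(a \<noteq> b \<longrightarrow> f b = 0) \<and> (a = b \<longrightarrow> f = g)"
        using \<open>(a,f)\<in>Z\<close> \<open>(b,g)\<in>Z\<close> unfolding BOgood_def by blast
    qed
    then show "\<Union>CC \<in> {P. BOgood P}" by simp
qed

lemma BO_max: "\<exists>P. BOgood P \<and> (\<forall>Q. BOgood Q \<longrightarrow> P \<subseteq> Q \<longrightarrow> Q = P)"
  using Zorn_Lemma[OF ballI[OF BO_chain]] by auto

lemma renc_inj:
  fixes t t' :: real
  assumes eq: "{m::nat. of_rat (from_nat m :: rat) < t} = {m. of_rat (from_nat m :: rat) < t'}"
  shows "t = t'"
proof -
  have one: "\<And>t t' :: real. t < t' \<Longrightarrow> {m::nat. of_rat (from_nat m :: rat) < t} \<noteq> {m. of_rat (from_nat m :: rat) < t'}"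
  proof -
    fix t t' :: real assume "t < t'"
    then obtain q :: rat where q: "t < of_rat q" "of_rat q < t'" using of_rat_dense by blast
    have "to_nat q \<in> {m. of_rat (from_nat m :: rat) < t'}" using q by simp
    moreover have "to_nat q \<notin> {m. of_rat (from_nat m :: rat) < t}" using q by simp
    ultimately show "{m::nat. of_rat (from_nat m :: rat) < t} \<noteq> {m. of_rat (from_nat m :: rat) < t'}" by blast
  qed
  show "t = t'" using eq one[of t t'] one[of t' t] by (cases "t < t'"; cases "t' < t") auto
qed

definition dec :: "'a set \<Rightarrow> ('a \<Rightarrow> real) \<Rightarrow> 'a::real_vector" where
  "dec A c = (\<Sum>v\<in>{v\<in>A. c v \<noteq> 0}. c v *\<^sub>R v)"

lemma dec_cong: "(\<And>a. a\<in>A \<Longrightarrow> c a = c' a) \<Longrightarrow> dec A c = dec A c'"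
proof -
  assume h: "\<And>a. a\<in>A \<Longrightarrow> c a = c' a"
  then have "{v\<in>A. c v \<noteq> 0} = {v\<in>A. c' v \<noteq> 0}" by auto
  then show ?thesis unfolding dec_def using h by (intro sum.cong) auto
qed

lemma span_dec:
  fixes y :: "'a::real_normed_vector"
  assumes "y \<in> span A" shows "\<exists>c. dec A c = y"
proof -
  from assms obtain S u where S: "finite S" "S \<subseteq> A" "y = (\<Sum>v\<in>S. u v *\<^sub>R v)"
    unfolding span_explicit by blast
  define c where "c v = (if v \<in> S then u v else 0)" for v
  have sub: "{v\<in>A. c v \<noteq> 0} \<subseteq> S" unfolding c_def by auto
  have "dec A c = (\<Sum>v\<in>S. c v *\<^sub>R v)" unfolding dec_def
    by (rule sum.mono_neutral_left[OF S(1) sub]) (use S(2) c_def in auto)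
  also have "\<dots> = y" unfolding S(3) c_def by (rule sum.cong) auto
  finally show ?thesis by blast
qed

lemma closure_dec:
  fixes z :: "'a::real_normed_vector"
  assumes "z \<in> closure (span A)" shows "\<exists>c::nat \<Rightarrow> 'a \<Rightarrow> real. (\<lambda>n. dec A (c n)) \<longlonglongrightarrow> z"
proof -
  obtain s where s: "\<forall>n. s n \<in> span A" "s \<longlonglongrightarrow> z" using assms unfolding closure_sequential by blast
  have "\<forall>n. \<exists>c. dec A c = s n" using s(1) span_dec by blast
  then obtain c where "\<And>n. dec A (c n) = s n" by metis
  then show ?thesis using s(2) by (intro exI[of _ c]) simp
qed

lemma encode:
  fixes A :: "'a::real_normed_vector set" and F :: "'a \<Rightarrow> 'a \<Rightarrow> real"
  assumes lin: "\<And>a. a \<in> A \<Longrightarrow> linear (F a)"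
    and WZ: "\<And>w. (\<forall>a\<in>A. F a w = 0) \<Longrightarrow> w \<in> closure (span A)"
  shows "\<exists>\<Phi>::'a \<Rightarrow> (nat \<times> 'a \<times> nat) set. inj \<Phi> \<and> (\<forall>x. \<Phi> x \<subseteq> UNIV \<times> (A \<times> UNIV))"
proof -
  define sq where "sq z = (SOME c::nat \<Rightarrow> 'a \<Rightarrow> real. (\<lambda>n. dec A (c n)) \<longlonglongrightarrow> z)" for z
  define r where "r x = (SOME y. \<forall>a\<in>A. F a y = F a x)" for x
  define val where "val x n a = (if n = 0 then F a x else sq (x - r x) (n - 1) a)" for x n a
  define renc where "renc t = {m::nat. of_rat (from_nat m :: rat) < t}" for t :: real
  define \<Phi> where "\<Phi> x = {(n,a,m). a \<in> A \<and> m \<in> renc (val x n a)}" for x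
  have sub: "\<forall>x. \<Phi> x \<subseteq> UNIV \<times> (A \<times> UNIV)" unfolding \<Phi>_def by auto
  have rx: "\<And>x a. a\<in>A \<Longrightarrow> F a (r x) = F a x"
  proof -
    fix x a assume "a \<in> A"
    have "\<forall>a\<in>A. F a (r x) = F a x" unfolding r_def by (rule someI[of _ x]) simp
    then show "F a (r x) = F a x" using \<open>a\<in>A\<close> by blast
  qed
  have zW: "\<And>x. x - r x \<in> closure (span A)"
  proof -
    fix x show "x - r x \<in> closure (span A)"
    proof (rule WZ, intro ballI)
      fix a assume "a \<in> A"
      then show "F a (x - r x) = 0" using rx lin linear_diff by (metis diff_self)
    qed
  qed
  have sqz: "\<And>z. z \<in> closure (span A) \<Longrightarrow> (\<lambda>n. dec A (sq z n)) \<longlonglongrightarrow> z"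
  proof -
    fix z :: 'a assume "z \<in> closure (span A)"
    from closure_dec[OF this] obtain c where "(\<lambda>n. dec A (c n)) \<longlonglongrightarrow> z" by blast
    then show "(\<lambda>n. dec A (sq z n)) \<longlonglongrightarrow> z"
      unfolding sq_def using someI[of "\<lambda>c. (\<lambda>n. dec A (c n)) \<longlonglongrightarrow> z" c] by simp
  qed
  have "inj \<Phi>"
  proof (rule injI)
    fix x x' assume eq: "\<Phi> x = \<Phi> x'"
    have veq: "\<And>n a. a \<in> A \<Longrightarrow> val x n a = val x' n a"
    proof -
      fix n a assume a: "a \<in> A"
      have "renc (val x n a) = renc (val x' n a)"
      proof
        show "renc (val x n a) \<subseteq> renc (val x' n a)"
        proof
          fix m assume "m \<in> renc (val x n a)"
          then have "(n,a,m) \<in> \<Phi> x" using a unfolding \<Phi>_def by simp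
          then have "(n,a,m) \<in> \<Phi> x'" using eq by simp
          then show "m \<in> renc (val x' n a)" unfolding \<Phi>_def by simp
        qed
      next
        show "renc (val x' n a) \<subseteq> renc (val x n a)"
        proof
          fix m assume "m \<in> renc (val x' n a)"
          then have "(n,a,m) \<in> \<Phi> x'" using a unfolding \<Phi>_def by simp
          then have "(n,a,m) \<in> \<Phi> x" using eq by simp
          then show "m \<in> renc (val x n a)" unfolding \<Phi>_def by simp
        qed
      qed
      then show "val x n a = val x' n a" unfolding renc_def by (rule renc_inj)
    qed
    have F0: "\<And>a. a \<in> A \<Longrightarrow> F a x = F a x'" using veq[of _ 0] unfolding val_def by simp
    have "(\<lambda>y. \<forall>a\<in>A. F a y = F a x) = (\<lambda>y. \<forall>a\<in>A. F a y = F a x')" using F0 by auto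
    then have req: "r x = r x'" unfolding r_def by simp
    have sqeq: "\<And>n. dec A (sq (x - r x) n) = dec A (sq (x' - r x') n)"
    proof -
      fix n show "dec A (sq (x - r x) n) = dec A (sq (x' - r x') n)"
        using veq[of _ "Suc n"] unfolding val_def by (intro dec_cong) simp
    qed
    have l1: "(\<lambda>n. dec A (sq (x - r x) n)) \<longlonglongrightarrow> x - r x" by (rule sqz[OF zW])
    have l2: "(\<lambda>n. dec A (sq (x - r x) n)) \<longlonglongrightarrow> x' - r x'" unfolding sqeq by (rule sqz[OF zW])
    have "x - r x = x' - r x'" using l1 l2 by (rule LIMSEQ_unique)
    then show "x = x'" using req by simp
  qed
  then show ?thesis using sub by blast
qed

lemma BO_insert:
  assumes P: "BOgood P" and g: "bounded_linear g" "g w = 1" and w: "w \<notin> fst ` P"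
    and h: "\<And>a f. (a,f)\<in>P \<Longrightarrow> g a = 0 \<and> f w = 0"
  shows "BOgood (insert (w,g) P)"
proof -
  have P1: "\<And>a f. (a,f)\<in>P \<Longrightarrow> bounded_linear f \<and> f a = 1"
   and P2: "\<And>a f b h. (a,f)\<in>P \<Longrightarrow> (b,h)\<in>P \<Longrightarrow> (a \<noteq> b \<longrightarrow> f b = 0) \<and> (a = b \<longrightarrow> f = h)"
    using P unfolding BOgood_def by blast+
  have wne: "\<And>a f. (a,f)\<in>P \<Longrightarrow> a \<noteq> w" using w by force
  show ?thesis unfolding BOgood_def
  proof (rule conjI; intro allI impI)
    fix a f assume "(a,f) \<in> insert (w,g) P"
    then show "bounded_linear f \<and> f a = 1" using P1 g by auto
  next
    fix a f b k assume a: "(a,f) \<in> insert (w,g) P" and b: "(b,k) \<in> insert (w,g) P"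
    show "(a \<noteq> b \<longrightarrow> f b = 0) \<and> (a = b \<longrightarrow> f = k)"
    proof (cases "(a,f) = (w,g)")
      case True
      show ?thesis
      proof (cases "(b,k) = (w,g)")
        case True2: True then show ?thesis using True by simp
      next
        case False then have "(b,k)\<in>P" using b False by blast
        then show ?thesis using True h wne by fastforce
      qed
    next
      case False then have aP: "(a,f)\<in>P" using a False by blast
      show ?thesis
      proof (cases "(b,k) = (w,g)")
        case True then show ?thesis using aP h wne by fastforce
      next
        case False then have "(b,k)\<in>P" using b False by blast
        then show ?thesis using aP P2 by blast
      qed
    qed
  qed
qed

unbundle cardinal_syntax

theorem mainTheorem2:
  fixes K :: "'a::banach set"
  assumes inf_dim: "\<not> (\<exists>B::'a set. finite B \<and> span B = UNIV)"
    and biort: "is_biort TYPE('a) K"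
  shows "\<exists>D::'a set. closure D = UNIV \<and> (card_of D, card_of (Pow K)) \<in> ordLeq"
proof -
  obtain P :: "('a \<times> ('a \<Rightarrow> real)) set" where P: "BOgood P" and Pmax: "\<And>Q. BOgood Q \<Longrightarrow> P \<subseteq> Q \<Longrightarrow> Q = P"
    using BO_max by blast
  have P1: "\<And>a f. (a,f)\<in>P \<Longrightarrow> bounded_linear f \<and> f a = 1"
   and P2: "\<And>a f b h. (a,f)\<in>P \<Longrightarrow> (b,h)\<in>P \<Longrightarrow> (a \<noteq> b \<longrightarrow> f b = 0) \<and> (a = b \<longrightarrow> f = h)"
    using P unfolding BOgood_def by blast+
  define A where "A = fst ` P"
  define F where "F a = (SOME g. (a,g)\<in>P)" for a
  have aF: "\<And>a. a \<in> A \<Longrightarrow> (a, F a) \<in> P"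
  proof -
    fix a assume "a \<in> A"
    then obtain g where "(a,g)\<in>P" unfolding A_def by force
    then show "(a, F a) \<in> P" unfolding F_def by (rule someI[of "\<lambda>g. (a,g)\<in>P"])
  qed
  have Funiq: "\<And>a g. (a,g)\<in>P \<Longrightarrow> F a = g"
  proof -
    fix a g assume ag: "(a,g)\<in>P"
    then have "a \<in> A" unfolding A_def by force
    then show "F a = g" using aF ag P2 by blast
  qed
  have Fbl: "\<And>a. a\<in>A \<Longrightarrow> bounded_linear (F a)" using aF P1 by blast
  have Faa: "\<And>a. a\<in>A \<Longrightarrow> F a a = 1" using aF P1 by blast
  have Fab: "\<And>a b. a\<in>A \<Longrightarrow> b\<in>A \<Longrightarrow> a\<noteq>b \<Longrightarrow> F a b = 0" using aF P2 by blast
  have Flin: "\<And>a. a\<in>A \<Longrightarrow> linear (F a)" using Fbl bounded_linear.linear by blast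
  have bs: "biorthogonal_system A (\<lambda>a. a) F" unfolding biorthogonal_system_def using Fbl Faa Fab by auto
  have AK: "|A| \<le>o |K|" using biort bs unfolding is_biort_def biort_bounded_by_def by blast
  have AZ: "A \<subseteq> closure (span A)" using closure_subset span_superset by blast
  have WZ: "\<And>w. (\<forall>a\<in>A. F a w = 0) \<Longrightarrow> w \<in> closure (span A)"
  proof (rule ccontr)
    fix w assume w0: "\<forall>a\<in>A. F a w = 0" and wn: "w \<notin> closure (span A)"
    obtain g :: "'a \<Rightarrow> real" where g: "bounded_linear g" "g w = 1" "\<forall>z\<in>closure(span A). g z = 0"
      using HB_sep[OF closed_closure subspace_closure_gen[OF subspace_span] wn] by blast
    have wA: "w \<notin> fst ` P" using AZ wn unfolding A_def by blast
    have h: "\<And>a f. (a,f)\<in>P \<Longrightarrow> g a = 0 \<and> f w = 0"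
    proof -
      fix a f assume af: "(a,f)\<in>P"
      then have aA: "a \<in> A" unfolding A_def by force
      then have "g a = 0" using g(3) AZ by blast
      moreover have "f w = 0" using w0 aA Funiq[OF af] by blast
      ultimately show "g a = 0 \<and> f w = 0" by blast
    qed
    have "BOgood (insert (w,g) P)" using BO_insert[OF P g(1,2) wA] h by blast
    then have "insert (w,g) P = P" using Pmax by blast
    then show False using wA by force
  qed
  have Ainf: "infinite A"
  proof
    assume fin: "finite A"
    define E where "E = {z. z = (\<Sum>a\<in>A. F a z *\<^sub>R a)}"
    have AE: "A \<subseteq> E"
    proof
      fix b assume b: "b \<in> A"
      have "(\<Sum>a\<in>A. F a b *\<^sub>R a) = F b b *\<^sub>R b + (\<Sum>a\<in>A - {b}. F a b *\<^sub>R a)"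
        by (rule sum.remove[OF fin b])
      also have "(\<Sum>a\<in>A - {b}. F a b *\<^sub>R a) = 0" using Fab b by (intro sum.neutral) auto
      finally show "b \<in> E" unfolding E_def using Faa b by simp
    qed
    have E0: "0 \<in> E" unfolding E_def using Flin by (simp add: linear_0)
    have Eadd: "\<And>x y. x \<in> E \<Longrightarrow> y \<in> E \<Longrightarrow> x + y \<in> E"
    proof -
      fix x y assume "x \<in> E" "y \<in> E"
      then have x: "x = (\<Sum>a\<in>A. F a x *\<^sub>R a)" and y: "y = (\<Sum>a\<in>A. F a y *\<^sub>R a)"
        unfolding E_def by auto
      have "(\<Sum>a\<in>A. F a (x + y) *\<^sub>R a) = (\<Sum>a\<in>A. F a x *\<^sub>R a + F a y *\<^sub>R a)"
        by (rule sum.cong) (simp_all add: Flin linear_add scaleR_add_left)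
      also have "\<dots> = (\<Sum>a\<in>A. F a x *\<^sub>R a) + (\<Sum>a\<in>A. F a y *\<^sub>R a)" by (rule sum.distrib)
      finally show "x + y \<in> E" unfolding E_def using x y by simp
    qed
    have Esc: "\<And>c x. x \<in> E \<Longrightarrow> c *\<^sub>R x \<in> E"
    proof -
      fix c x assume "x \<in> E"
      then have x: "x = (\<Sum>a\<in>A. F a x *\<^sub>R a)" unfolding E_def by auto
      have "(\<Sum>a\<in>A. F a (c *\<^sub>R x) *\<^sub>R a) = (\<Sum>a\<in>A. c *\<^sub>R (F a x *\<^sub>R a))"
        by (rule sum.cong) (simp_all add: Flin linear_scale)
      also have "\<dots> = c *\<^sub>R (\<Sum>a\<in>A. F a x *\<^sub>R a)" by (rule scaleR_sum_right[symmetric])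
      finally show "c *\<^sub>R x \<in> E" unfolding E_def using x by simp
    qed
    have sE: "subspace E" unfolding subspace_def using E0 Eadd Esc by blast
    have ct: "continuous_on UNIV (\<lambda>z. \<Sum>a\<in>A. F a z *\<^sub>R a)"
      by (rule continuous_on_sum, rule continuous_on_scaleR, rule linear_continuous_on[OF Fbl],
          assumption, rule continuous_on_const)
    have cE: "closed E" unfolding E_def
      by (rule closed_Collect_eq[OF continuous_on_id ct])
    have ZE: "closure (span A) \<subseteq> E"
      by (rule closure_minimal[OF span_minimal[OF AE sE] cE])
    have "\<And>x. x \<in> span A"
    proof -
      fix x
      define y where "y = x - (\<Sum>a\<in>A. F a x *\<^sub>R a)"
      have "\<forall>b\<in>A. F b y = 0"
      proof
        fix b assume b: "b \<in> A"
        have "F b y = F b x - (\<Sum>a\<in>A. F a x * F b a)"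
          unfolding y_def using Flin[OF b] by (simp add: linear_diff linear_sum linear_scale)
        also have "(\<Sum>a\<in>A. F a x * F b a) = F b x * F b b + (\<Sum>a\<in>A - {b}. F a x * F b a)"
          by (rule sum.remove[OF fin b])
        also have "(\<Sum>a\<in>A - {b}. F a x * F b a) = 0" using Fab b by (intro sum.neutral) auto
        finally show "F b y = 0" using Faa b by simp
      qed
      then have "y \<in> E" using WZ ZE by blast
      then have "y \<in> span A" unfolding E_def
        by (simp, subst (asm) eq_commute) (metis (no_types, lifting) span_base span_scale span_sum)
      moreover have "(\<Sum>a\<in>A. F a x *\<^sub>R a) \<in> span A" by (intro span_sum span_scale span_base)
      ultimately have "y + (\<Sum>a\<in>A. F a x *\<^sub>R a) \<in> span A" by (rule span_add)
      then show "x \<in> span A" unfolding y_def by simp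
    qed
    then have "span A = UNIV" by blast
    then show False using inf_dim fin by blast
  qed
  obtain \<Phi> :: "'a \<Rightarrow> (nat \<times> 'a \<times> nat) set" where \<Phi>: "inj \<Phi>" "\<forall>x. \<Phi> x \<subseteq> UNIV \<times> (A \<times> UNIV)"
    using encode[of A F, OF Flin WZ] by blast
  have nA: "|UNIV::nat set| \<le>o |A|" using Ainf infinite_iff_card_of_nat by blast
  have c1: "|A \<times> (UNIV::nat set)| =o |A|" using card_of_Times_infinite[OF Ainf _ nA] by auto
  have inf2: "infinite (A \<times> (UNIV::nat set))" using Ainf by (auto dest: finite_cartesian_productD1)
  have nA2: "|UNIV::nat set| \<le>o |A \<times> (UNIV::nat set)|" using inf2 infinite_iff_card_of_nat by blast
  have c2: "|(UNIV::nat set) \<times> (A \<times> (UNIV::nat set))| =o |A \<times> (UNIV::nat set)|"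
    using card_of_Times_infinite[OF inf2 _ nA2] by auto
  have S0K: "|(UNIV::nat set) \<times> (A \<times> (UNIV::nat set))| \<le>o |K|"
    using ordIso_ordLeq_trans[OF c2 ordIso_ordLeq_trans[OF c1 AK]] .
  then obtain g where g: "inj_on g ((UNIV::nat set) \<times> (A \<times> (UNIV::nat set)))"
      "g ` ((UNIV::nat set) \<times> (A \<times> (UNIV::nat set))) \<subseteq> K"
    unfolding card_of_ordLeq[symmetric] by blast
  define S0 where "S0 = (UNIV::nat set) \<times> (A \<times> (UNIV::nat set))"
  have injg: "inj_on (image g) (Pow S0)" using inj_on_image_Pow[OF g(1)] unfolding S0_def .
  have "inj_on (\<lambda>x. g ` \<Phi> x) UNIV"
  proof (rule inj_onI)
    fix x y assume "g ` \<Phi> x = g ` \<Phi> y"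
    moreover have "\<Phi> x \<in> Pow S0" "\<Phi> y \<in> Pow S0" using \<Phi>(2) unfolding S0_def by auto
    ultimately have "\<Phi> x = \<Phi> y" using injg by (meson inj_onD)
    then show "x = y" using \<Phi>(1) by (meson injD)
  qed
  moreover have "(\<lambda>x. g ` \<Phi> x) ` UNIV \<subseteq> Pow K" using g(2) \<Phi>(2) by blast
  ultimately have "|UNIV::'a set| \<le>o |Pow K|" unfolding card_of_ordLeq[symmetric] by blast
  then show ?thesis by (intro exI[of _ UNIV]) simp
qed

end
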